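(* For a thermodynamic Stephani universe with $b''(R)=0$, one has $A_1=0$; if moreover $A_2=c_2$ is constant, then $\chi(\pi)=\lambda\pi+\lambda-\frac23$ with $\lambda=1+c_2/3$. If $\lambda\in(\lambda_\eta,5/6)$, $\lambda_\eta=(13-2\sqrt{30})/3$, then for all $\pi\in(0,1)$: $0<\chi(\pi)<1$, $\zeta(\pi)>0$ and $\eta(\pi)>0$. In particular, if $b''=0$ and $9+16A_1+12A_2=0$, then $A_2=-3/4$, $\lambda=3/4$, $\chi(\pi)=(9\pi+1)/12$, and these inequalities hold on all of $(0,1)$.
   Context: Thermodynamic Stephani universe: $ds^2=-\alpha^2dt^2+\Omega^2(dx^2+dy^2+dz^2)$, $L=R(t)/(1+b(t)w)$, $\Omega=\frac{w}{2z}L$, $\alpha=R\partial_R\ln L$, $w=2z/(1+\frac\varepsilon4r^2)$, $\varepsilon\in\{0,\pm1\}$; functions of $t$ regarded as functions of $R$ (prime $=d/dR$); $\rho=\frac{3}{R^2}(\dot R^2+\varepsilon-4b^2)$, $a(R)=-R\rho'(R)/(3\rho)$, $A_1=-\frac{Rb''}{a^2b'}$, $A_2=\frac{Rb''}{ab'}-\frac{a'R}{a^2}-\frac1a$, and the indicatrix is $\chi=\pi+\frac13+\frac13(\pi+1)[(\pi+1)A_1+A_2]$, $\pi=p/\rho$. $\zeta(\pi)=(1+\pi)(\chi-\pi)\chi'+2\chi(1-\chi)$, $\eta(\pi)=(2\pi+1)\chi-\pi$. *)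

theory Defs
  imports "HOL-Analysis.Analysis"
begin

text \<open>Thermodynamic Stephani universe data, all regarded as functions of R
  (prime = d/dR).  Rdot R is the value of dR/dt expressed as a function of R,
  eps is the curvature index, b is b(t) regarded as a function of R.\<close>

definition stephani_rho :: "(real \<Rightarrow> real) \<Rightarrow> real \<Rightarrow> (real \<Rightarrow> real) \<Rightarrow> real \<Rightarrow> real" where
  "stephani_rho Rdot eps b R = 3 / R\<^sup>2 * ((Rdot R)\<^sup>2 + eps - 4 * (b R)\<^sup>2)"

definition stephani_a :: "(real \<Rightarrow> real) \<Rightarrow> real \<Rightarrow> (real \<Rightarrow> real) \<Rightarrow> real \<Rightarrow> real" where
  "stephani_a Rdot eps b R =
     - R * deriv (stephani_rho Rdot eps b) R / (3 * stephani_rho Rdot eps b R)"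

definition stephani_A1 :: "(real \<Rightarrow> real) \<Rightarrow> real \<Rightarrow> (real \<Rightarrow> real) \<Rightarrow> real \<Rightarrow> real" where
  "stephani_A1 Rdot eps b R =
     - (R * deriv (deriv b) R) / ((stephani_a Rdot eps b R)\<^sup>2 * deriv b R)"

definition stephani_A2 :: "(real \<Rightarrow> real) \<Rightarrow> real \<Rightarrow> (real \<Rightarrow> real) \<Rightarrow> real \<Rightarrow> real" where
  "stephani_A2 Rdot eps b R =
     R * deriv (deriv b) R / (stephani_a Rdot eps b R * deriv b R)
     - deriv (stephani_a Rdot eps b) R * R / (stephani_a Rdot eps b R)\<^sup>2
     - 1 / stephani_a Rdot eps b R"

text \<open>Indicatrix chi as a function of pi = p/rho, at the point R.\<close>
definition indicatrix :: "(real \<Rightarrow> real) \<Rightarrow> real \<Rightarrow> (real \<Rightarrow> real) \<Rightarrow> real \<Rightarrow> real \<Rightarrow> real" where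
  "indicatrix Rdot eps b R = (\<lambda>p. p + 1/3 + 1/3 * (p + 1) *
      ((p + 1) * stephani_A1 Rdot eps b R + stephani_A2 Rdot eps b R))"

definition zeta_fn :: "(real \<Rightarrow> real) \<Rightarrow> real \<Rightarrow> real" where
  "zeta_fn chi p = (1 + p) * (chi p - p) * deriv chi p + 2 * chi p * (1 - chi p)"

definition eta_fn :: "(real \<Rightarrow> real) \<Rightarrow> real \<Rightarrow> real" where
  "eta_fn chi p = (2 * p + 1) * chi p - p"

definition lambda_eta :: real where
  "lambda_eta = (13 - 2 * sqrt 30) / 3"

end

theory Submission
  imports Defs
begin

lemma sqrt30_up: "sqrt 30 < (11/2::real)"
proof -
  have "sqrt 30 < sqrt ((11/2)^2)" by (subst real_sqrt_less_iff) (simp add: power2_eq_square)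
  thus ?thesis by simp
qed

lemma sqrt30_lo: "sqrt 30 > (43/8::real)"
  by (rule real_less_rsqrt) (simp add: power2_eq_square)

lemma le_bounds: "2/3 < lambda_eta" "lambda_eta < 3/4"
  using sqrt30_up sqrt30_lo unfolding lambda_eta_def by auto

lemma lin_ineqs:
  fixes lam p :: real
  assumes l1: "lambda_eta < lam" and l2: "lam < 5/6" and p: "0 < p" "p < 1"
  defines "chi \<equiv> (\<lambda>p. lam * p + lam - 2/3)"
  shows "0 < chi p \<and> chi p < 1 \<and> zeta_fn chi p > 0 \<and> eta_fn chi p > 0"
proof -
  have l0: "lam > 2/3" using l1 le_bounds by auto
  have d: "deriv chi p = lam" unfolding chi_def
    by (rule DERIV_imp_deriv) (auto intro!: derivative_eq_intros)
  have lp: "lam * p > 0" using l0 p by simp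
  have lp2: "lam * p < lam" using l0 p by simp
  have c1: "0 < chi p" unfolding chi_def using l0 lp by linarith
  have c2: "chi p < 1" unfolding chi_def using l2 lp2 by linarith
  define q where "q = p + 1"
  have q: "1 < q" "q < 2" using p q_def by auto
  have zeq: "zeta_fn chi p = -lam*(lam+1)*q^2 + 5*lam*q - 20/9"
    unfolding zeta_fn_def d unfolding chi_def q_def
    by (simp add: field_simps power2_eq_square)
  define z1 where "z1 = 4*lam - lam^2 - 20/9"
  define z2 where "z2 = 6*lam - 4*lam^2 - 20/9"
  have z1: "z1 > 0" unfolding z1_def
  proof -
    have "4*lam - lam^2 - 20/9 = (lam - 2/3) * (10/3 - lam)" by (simp add: field_simps power2_eq_square)
    moreover have "(lam - 2/3) * (10/3 - lam) > 0" using l0 l2 by (intro mult_pos_pos) auto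
    ultimately show "4*lam - lam^2 - 20/9 > 0" by simp
  qed
  have z2: "z2 > 0" unfolding z2_def
  proof -
    have "6*lam - 4*lam^2 - 20/9 = 4*(lam - 2/3) * (5/6 - lam)" by (simp add: field_simps power2_eq_square)
    moreover have "4*(lam - 2/3) * (5/6 - lam) > 0" using l0 l2 by (intro mult_pos_pos) auto
    ultimately show "6*lam - 4*lam^2 - 20/9 > 0" by simp
  qed
  have "zeta_fn chi p = (2-q)*z1 + (q-1)*z2 + lam*(lam+1)*(q-1)*(2-q)"
    unfolding zeq z1_def z2_def by (simp add: field_simps power2_eq_square)
  moreover have "(2-q)*z1 > 0" using q z1 by simp
  moreover have "(q-1)*z2 > 0" using q z2 by simp
  moreover have "lam*(lam+1)*(q-1)*(2-q) > 0" using q l0 by simp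
  ultimately have zp: "zeta_fn chi p > 0" by linarith
  define w0 where "w0 = sqrt 30"
  have ss: "w0^2 = 30" unfolding w0_def by simp
  have s0: "w0 \<ge> 0" unfolding w0_def by simp
    define disc where "disc = lam^2 - 26/3*lam + 49/9"
  have "disc = (lam - (13 - 2 * w0)/3) * (lam - (13 + 2 * w0)/3)"
  proof -
    define a1 where "a1 = (13 - 2 * w0)/3"
    define b1 where "b1 = (13 + 2 * w0)/3"
    have ab: "a1 * b1 = (169 - 4 * w0^2) / 9" unfolding a1_def b1_def
      by (simp add: field_simps power2_eq_square)
    have ab2: "a1 * b1 = 49/9" unfolding ab ss by simp
    have ab3: "a1 + b1 = 26/3" unfolding a1_def b1_def by (simp add: field_simps)
    have "(lam - a1) * (lam - b1) = lam^2 - (a1 + b1) * lam + a1 * b1"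
      by (simp add: algebra_simps power2_eq_square)
    then show ?thesis unfolding disc_def ab2 ab3 a1_def[symmetric] b1_def[symmetric] by simp
  qed
  moreover have "lam - (13 - 2 * w0)/3 > 0" using l1 unfolding lambda_eta_def w0_def by simp
  moreover have "lam - (13 + 2 * w0)/3 < 0" using l2 s0 by simp
  ultimately have dn: "disc < 0" by (simp add: mult_pos_neg)
  have "8*lam*eta_fn chi p = (4*lam*p + (3*lam - 7/3))^2 - disc"
    unfolding eta_fn_def chi_def disc_def by (simp add: field_simps power2_eq_square)
  moreover have "(4*lam*p + (3*lam - 7/3))^2 \<ge> 0" by simp
  ultimately have "8*lam*eta_fn chi p > 0" using dn by linarith
  hence ep: "eta_fn chi p > 0" using l0 by (simp add: zero_less_mult_iff)
  show ?thesis using c1 c2 zp ep by simp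
qed

lemma A1_zero:
  assumes "(deriv b has_real_derivative 0) (at R)"
  shows "stephani_A1 Rdot eps b R = 0"
  using DERIV_imp_deriv[OF assms] unfolding stephani_A1_def by simp

lemma chi_form:
  assumes "(deriv b has_real_derivative 0) (at R)"
  shows "indicatrix Rdot eps b R = (\<lambda>p. (1 + stephani_A2 Rdot eps b R / 3) * p + (1 + stephani_A2 Rdot eps b R / 3) - 2/3)"
  using A1_zero[OF assms] unfolding indicatrix_def
  by (auto simp: algebra_simps fun_eq_iff)

theorem mainTheorem14:
  fixes Rdot b :: "real \<Rightarrow> real" and eps :: real and I :: "real set"
  assumes eps: "eps \<in> {-1, 0, 1}"
    and I: "open I" "I \<subseteq> {0<..}"
    and bpp: "\<forall>R\<in>I. (deriv b has_real_derivative 0) (at R)"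
  shows "(\<forall>R\<in>I. stephani_A1 Rdot eps b R = 0)
    \<and> (\<forall>c2. (\<forall>R\<in>I. stephani_A2 Rdot eps b R = c2) \<longrightarrow>
          (let lam = 1 + c2 / 3 in
            (\<forall>R\<in>I. \<forall>p. indicatrix Rdot eps b R p = lam * p + lam - 2/3)
            \<and> (lambda_eta < lam \<and> lam < 5/6 \<longrightarrow>
                (\<forall>R\<in>I. \<forall>p\<in>{0<..<1}.
                   0 < indicatrix Rdot eps b R p \<and> indicatrix Rdot eps b R p < 1
                   \<and> zeta_fn (indicatrix Rdot eps b R) p > 0
                   \<and> eta_fn (indicatrix Rdot eps b R) p > 0))))
    \<and> ((\<forall>R\<in>I. 9 + 16 * stephani_A1 Rdot eps b R + 12 * stephani_A2 Rdot eps b R = 0) \<longrightarrow>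
          (\<forall>R\<in>I. stephani_A2 Rdot eps b R = -3/4
             \<and> 1 + stephani_A2 Rdot eps b R / 3 = 3/4
             \<and> (\<forall>p. indicatrix Rdot eps b R p = (9 * p + 1) / 12)
             \<and> (\<forall>p\<in>{0<..<1}.
                   0 < indicatrix Rdot eps b R p \<and> indicatrix Rdot eps b R p < 1
                   \<and> zeta_fn (indicatrix Rdot eps b R) p > 0
                   \<and> eta_fn (indicatrix Rdot eps b R) p > 0)))"
proof -
  have P12: "(\<forall>R\<in>I. stephani_A1 Rdot eps b R = 0)
    \<and> (\<forall>c2. (\<forall>R\<in>I. stephani_A2 Rdot eps b R = c2) \<longrightarrow>
          (let lam = 1 + c2 / 3 in
            (\<forall>R\<in>I. \<forall>p. indicatrix Rdot eps b R p = lam * p + lam - 2/3)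
            \<and> (lambda_eta < lam \<and> lam < 5/6 \<longrightarrow>
                (\<forall>R\<in>I. \<forall>p\<in>{0<..<1}.
                   0 < indicatrix Rdot eps b R p \<and> indicatrix Rdot eps b R p < 1
                   \<and> zeta_fn (indicatrix Rdot eps b R) p > 0
                   \<and> eta_fn (indicatrix Rdot eps b R) p > 0))))"
  proof (intro conjI allI impI ballI)
    fix R assume "R \<in> I"
    then show "stephani_A1 Rdot eps b R = 0" using bpp A1_zero by blast
  next
    fix c2 assume h: "\<forall>R\<in>I. stephani_A2 Rdot eps b R = c2"
    show "let lam = 1 + c2 / 3 in
              (\<forall>R\<in>I. \<forall>p. indicatrix Rdot eps b R p = lam * p + lam - 2/3)
              \<and> (lambda_eta < lam \<and> lam < 5/6 \<longrightarrow>
                  (\<forall>R\<in>I. \<forall>p\<in>{0<..<1}.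
                     0 < indicatrix Rdot eps b R p \<and> indicatrix Rdot eps b R p < 1
                     \<and> zeta_fn (indicatrix Rdot eps b R) p > 0
                     \<and> eta_fn (indicatrix Rdot eps b R) p > 0))"
      unfolding Let_def
    proof (intro conjI impI ballI allI)
      fix R and p :: real assume R: "R \<in> I"
      show "indicatrix Rdot eps b R p = (1 + c2 / 3) * p + (1 + c2 / 3) - 2/3"
        using chi_form[of b R Rdot eps] bpp R h by simp
    next
      fix R and p :: real assume l: "lambda_eta < 1 + c2 / 3 \<and> 1 + c2 / 3 < 5 / 6" and R: "R \<in> I" and p: "p \<in> {0<..<1}"
      have e: "indicatrix Rdot eps b R = (\<lambda>p. (1 + c2 / 3) * p + (1 + c2 / 3) - 2/3)"
        using chi_form[of b R Rdot eps] bpp R h by simp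
      show "0 < indicatrix Rdot eps b R p" "indicatrix Rdot eps b R p < 1"
        "zeta_fn (indicatrix Rdot eps b R) p > 0" "eta_fn (indicatrix Rdot eps b R) p > 0"
        unfolding e using lin_ineqs[of "1 + c2/3" p] l p by auto
    qed
  qed
  have P3: "          stephani_A2 Rdot eps b R = -3/4
             \<and> 1 + stephani_A2 Rdot eps b R / 3 = 3/4
             \<and> (\<forall>p. indicatrix Rdot eps b R p = (9 * p + 1) / 12)
             \<and> (\<forall>p\<in>{0<..<1}.
                   0 < indicatrix Rdot eps b R p \<and> indicatrix Rdot eps b R p < 1
                   \<and> zeta_fn (indicatrix Rdot eps b R) p > 0
                   \<and> eta_fn (indicatrix Rdot eps b R) p > 0)"
    if h: "\<forall>R\<in>I. 9 + 16 * stephani_A1 Rdot eps b R + 12 * stephani_A2 Rdot eps b R = 0"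
      and R: "R \<in> I" for R
  proof -
    have a1: "stephani_A1 Rdot eps b R = 0" using bpp R A1_zero by blast
    have a2: "stephani_A2 Rdot eps b R = -3/4" using h R a1 by fastforce
    have e: "indicatrix Rdot eps b R = (\<lambda>p. (3/4) * p + (3/4) - 2/3)"
      using chi_form[of b R Rdot eps] bpp R a2 by simp
    have G: "stephani_A2 Rdot eps b R = -3/4
               \<and> 1 + stephani_A2 Rdot eps b R / 3 = 3/4
               \<and> (\<forall>p. indicatrix Rdot eps b R p = (9 * p + 1) / 12)
               \<and> (\<forall>p\<in>{0<..<1}.
                     0 < indicatrix Rdot eps b R p \<and> indicatrix Rdot eps b R p < 1
                     \<and> zeta_fn (indicatrix Rdot eps b R) p > 0
                     \<and> eta_fn (indicatrix Rdot eps b R) p > 0)" proof (intro conjI allI ballI)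
      fix p :: real assume p: "p \<in> {0<..<1}"
      have "lambda_eta < 3/4" using le_bounds by simp
      then show "0 < indicatrix Rdot eps b R p" "indicatrix Rdot eps b R p < 1"
        "zeta_fn (indicatrix Rdot eps b R) p > 0" "eta_fn (indicatrix Rdot eps b R) p > 0"
        unfolding e using lin_ineqs[of "3/4" p] p by auto
    qed (use a2 e in auto)
    then show ?thesis .
  qed
  show ?thesis using P12 P3 by blast
qed

end
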